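(* Let $\mathcal V$ be a descent category, $k$ a positive integer, and $X$ a $k$-category in $\mathcal V$. Then $X$ is $(k+1)$-coskeletal: for every $n\ge0$ the natural morphism $X_n\to\mathrm{Map}(\mathrm{sk}_{k+1}\Delta^n,X)$ is an isomorphism.
   Context: A descent category is a small category $\mathcal V$ with a subcategory of morphisms called covers such that: $\mathcal V$ has finite limits; pullbacks of covers are covers; if $f$ and $g\circ f$ are covers then $g$ is a cover. A simplicial space is a simplicial object in $\mathcal V$; for a finite simplicial set $T$, $\mathrm{Map}(T,X)$ is the finite limit representing simplicial maps $T\to X$; $\mathrm{sk}_{j}\Delta^n$ is the $j$-skeleton. $\Lambda^n_i=\bigcup_{j\ne i}\partial_j\Delta^n$. $\boldsymbol\Delta^1$ is the nerve of the groupoid with objects $\{0,1\}$ and exactly one morphism between any two objects, and $\mathrm{Map}(\boldsymbol\Delta^1,X)$ the limit representing simplicial maps $\boldsymbol\Delta^1\to X$. A $k$-category is a simplicial space $X$ such that $X_n\to\mathrm{Map}(\Lambda^n_i,X)$ is a cover for $0<i<n$ and an isomorphism for $n>k$, and $\mathrm{Map}(\boldsymbol\Delta^1,X)\to X_0$ (restriction to a vertex) is a cover. *)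

theory Defs
  imports Main
begin

record ('o,'m) cat =
  Ob  :: "'o set"
  Ar  :: "'m set"
  Dom :: "'m \<Rightarrow> 'o"
  Cod :: "'m \<Rightarrow> 'o"
  Cmp :: "'m \<Rightarrow> 'm \<Rightarrow> 'm"   (* Cmp C g f = g o f *)
  Idm :: "'o \<Rightarrow> 'm"

definition hom :: "('o,'m) cat \<Rightarrow> 'o \<Rightarrow> 'o \<Rightarrow> 'm \<Rightarrow> bool" where
  "hom C a b f \<longleftrightarrow> f \<in> Ar C \<and> Dom C f = a \<and> Cod C f = b"

definition is_category :: "('o,'m) cat \<Rightarrow> bool" where
  "is_category C \<longleftrightarrow>
     (\<forall>f\<in>Ar C. Dom C f \<in> Ob C \<and> Cod C f \<in> Ob C) \<and>
     (\<forall>a\<in>Ob C. hom C a a (Idm C a)) \<and>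
     (\<forall>f\<in>Ar C. \<forall>g\<in>Ar C. Cod C f = Dom C g \<longrightarrow> hom C (Dom C f) (Cod C g) (Cmp C g f)) \<and>
     (\<forall>f\<in>Ar C. \<forall>g\<in>Ar C. \<forall>h\<in>Ar C. Cod C f = Dom C g \<longrightarrow> Cod C g = Dom C h \<longrightarrow>
         Cmp C h (Cmp C g f) = Cmp C (Cmp C h g) f) \<and>
     (\<forall>f\<in>Ar C. Cmp C f (Idm C (Dom C f)) = f \<and> Cmp C (Idm C (Cod C f)) f = f)"

definition iso :: "('o,'m) cat \<Rightarrow> 'm \<Rightarrow> bool" where
  "iso C f \<longleftrightarrow> f \<in> Ar C \<and> (\<exists>g. hom C (Cod C f) (Dom C f) g \<and>
       Cmp C g f = Idm C (Dom C f) \<and> Cmp C f g = Idm C (Cod C f))"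

definition is_terminal :: "('o,'m) cat \<Rightarrow> 'o \<Rightarrow> bool" where
  "is_terminal C t \<longleftrightarrow> t \<in> Ob C \<and> (\<forall>a\<in>Ob C. \<exists>!f. hom C a t f)"

text \<open>Pullback square: f : A -> D, g : B -> D, p : P -> A, q : P -> B with f p = g q.
  Then q is the pullback of f along g.\<close>
definition is_pullback :: "('o,'m) cat \<Rightarrow> 'm \<Rightarrow> 'm \<Rightarrow> 'm \<Rightarrow> 'm \<Rightarrow> bool" where
  "is_pullback C f g p q \<longleftrightarrow>
     f \<in> Ar C \<and> g \<in> Ar C \<and> Cod C f = Cod C g \<and>
     hom C (Dom C p) (Dom C f) p \<and> hom C (Dom C p) (Dom C g) q \<and>
     Cmp C f p = Cmp C g q \<and>
     (\<forall>p' q'. hom C (Dom C p') (Dom C f) p' \<and> hom C (Dom C p') (Dom C g) q' \<and>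
        Dom C q' = Dom C p' \<and> Cmp C f p' = Cmp C g q' \<longrightarrow>
        (\<exists>!u. hom C (Dom C p') (Dom C p) u \<and> Cmp C p u = p' \<and> Cmp C q u = q'))"

text \<open>Finite limits, via the standard criterion: a terminal object and all pullbacks.\<close>
definition has_finite_limits :: "('o,'m) cat \<Rightarrow> bool" where
  "has_finite_limits C \<longleftrightarrow> (\<exists>t. is_terminal C t) \<and>
     (\<forall>f\<in>Ar C. \<forall>g\<in>Ar C. Cod C f = Cod C g \<longrightarrow> (\<exists>p q. is_pullback C f g p q))"

definition descent_category :: "('o,'m) cat \<Rightarrow> 'm set \<Rightarrow> bool" where
  "descent_category C Cov \<longleftrightarrow>
     is_category C \<and> has_finite_limits C \<and>
     Cov \<subseteq> Ar C \<and>
     (\<forall>a\<in>Ob C. Idm C a \<in> Cov) \<and>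
     (\<forall>f\<in>Cov. \<forall>g\<in>Cov. Cod C f = Dom C g \<longrightarrow> Cmp C g f \<in> Cov) \<and>
     (\<forall>f g p q. is_pullback C f g p q \<and> f \<in> Cov \<longrightarrow> q \<in> Cov) \<and>
     (\<forall>f\<in>Ar C. \<forall>g\<in>Ar C. Cod C f = Dom C g \<and> f \<in> Cov \<and> Cmp C g f \<in> Cov \<longrightarrow> g \<in> Cov)"

text \<open>Monotone maps [m] -> [n]; only the values on {0..m} matter.\<close>
definition mono_map :: "nat \<Rightarrow> nat \<Rightarrow> (nat \<Rightarrow> nat) \<Rightarrow> bool" where
  "mono_map m n \<theta> \<longleftrightarrow> (\<forall>i\<le>m. \<theta> i \<le> n) \<and> (\<forall>i j. i \<le> j \<and> j \<le> m \<longrightarrow> \<theta> i \<le> \<theta> j)"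

text \<open>A simplicial object: objects Xo n = X_n and, for monotone theta : [m] -> [n],
  the morphism Xm m n theta : X_n -> X_m (contravariant functor on Delta).\<close>
definition simplicial_object ::
  "('o,'m) cat \<Rightarrow> (nat \<Rightarrow> 'o) \<Rightarrow> (nat \<Rightarrow> nat \<Rightarrow> (nat \<Rightarrow> nat) \<Rightarrow> 'm) \<Rightarrow> bool" where
  "simplicial_object C Xo Xm \<longleftrightarrow>
     (\<forall>n. Xo n \<in> Ob C) \<and>
     (\<forall>m n \<theta>. mono_map m n \<theta> \<longrightarrow> hom C (Xo n) (Xo m) (Xm m n \<theta>)) \<and>
     (\<forall>m n \<theta> \<theta>'. mono_map m n \<theta> \<and> (\<forall>i\<le>m. \<theta> i = \<theta>' i) \<longrightarrow> Xm m n \<theta> = Xm m n \<theta>') \<and>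
     (\<forall>n. Xm n n (\<lambda>i. i) = Idm C (Xo n)) \<and>
     (\<forall>l m n \<phi> \<theta>. mono_map l m \<phi> \<and> mono_map m n \<theta> \<longrightarrow>
         Xm l n (\<theta> \<circ> \<phi>) = Cmp C (Xm l m \<phi>) (Xm m n \<theta>))"

text \<open>A simplex is a pair (m, sigma) with sigma the list of its vertices, encoded
  as a function on {0..m}, normalised to be 0 beyond m.\<close>
definition restr :: "nat \<Rightarrow> (nat \<Rightarrow> nat) \<Rightarrow> nat \<Rightarrow> nat" where
  "restr m \<sigma> = (\<lambda>i. if i \<le> m then \<sigma> i else 0)"

definition normal :: "nat \<Rightarrow> (nat \<Rightarrow> nat) \<Rightarrow> bool" where
  "normal m \<sigma> \<longleftrightarrow> (\<forall>i>m. \<sigma> i = 0)"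

definition simplex_set :: "nat \<Rightarrow> (nat \<times> (nat \<Rightarrow> nat)) set" where
  "simplex_set n = {(m,\<sigma>). mono_map m n \<sigma> \<and> normal m \<sigma>}"

definition skel :: "nat \<Rightarrow> nat \<Rightarrow> (nat \<times> (nat \<Rightarrow> nat)) set" where
  "skel j n = {(m,\<sigma>). (m,\<sigma>) \<in> simplex_set n \<and> card (\<sigma> ` {0..m}) \<le> j + 1}"

text \<open>Horn Lambda^n_i = union of the faces d_j Delta^n, j /= i (d_j misses vertex j).\<close>
definition horn :: "nat \<Rightarrow> nat \<Rightarrow> (nat \<times> (nat \<Rightarrow> nat)) set" where
  "horn n i = {(m,\<sigma>). (m,\<sigma>) \<in> simplex_set n \<and> (\<exists>j\<le>n. j \<noteq> i \<and> j \<notin> \<sigma> ` {0..m})}"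

text \<open>Nerve of the groupoid with objects {0,1} and one morphism between any two objects:
  its m-simplices are arbitrary maps [m] -> {0,1}.\<close>
definition groupoid_interval :: "(nat \<times> (nat \<Rightarrow> nat)) set" where
  "groupoid_interval = {(m,\<sigma>). (\<forall>i\<le>m. \<sigma> i \<le> 1) \<and> normal m \<sigma>}"

definition is_cone ::
  "('o,'m) cat \<Rightarrow> (nat \<Rightarrow> 'o) \<Rightarrow> (nat \<Rightarrow> nat \<Rightarrow> (nat \<Rightarrow> nat) \<Rightarrow> 'm) \<Rightarrow>
   (nat \<times> (nat \<Rightarrow> nat)) set \<Rightarrow> 'o \<Rightarrow> (nat \<times> (nat \<Rightarrow> nat) \<Rightarrow> 'm) \<Rightarrow> bool" where
  "is_cone C Xo Xm T A a \<longleftrightarrow> A \<in> Ob C \<and>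
     (\<forall>(m,\<sigma>)\<in>T. hom C A (Xo m) (a (m,\<sigma>))) \<and>
     (\<forall>(m,\<sigma>)\<in>T. \<forall>m' \<theta>. mono_map m' m \<theta> \<longrightarrow>
         Cmp C (Xm m' m \<theta>) (a (m,\<sigma>)) = a (m', restr m' (\<sigma> \<circ> \<theta>)))"

definition is_Map ::
  "('o,'m) cat \<Rightarrow> (nat \<Rightarrow> 'o) \<Rightarrow> (nat \<Rightarrow> nat \<Rightarrow> (nat \<Rightarrow> nat) \<Rightarrow> 'm) \<Rightarrow>
   (nat \<times> (nat \<Rightarrow> nat)) set \<Rightarrow> 'o \<Rightarrow> (nat \<times> (nat \<Rightarrow> nat) \<Rightarrow> 'm) \<Rightarrow> bool" where
  "is_Map C Xo Xm T A a \<longleftrightarrow> is_cone C Xo Xm T A a \<and>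
     (\<forall>B b. is_cone C Xo Xm T B b \<longrightarrow>
        (\<exists>!u. hom C B A u \<and> (\<forall>s\<in>T. Cmp C (a s) u = b s)))"

definition can_cone :: "(nat \<Rightarrow> nat \<Rightarrow> (nat \<Rightarrow> nat) \<Rightarrow> 'm) \<Rightarrow> nat \<Rightarrow> nat \<times> (nat \<Rightarrow> nat) \<Rightarrow> 'm" where
  "can_cone Xm n = (\<lambda>(m,\<sigma>). Xm m n \<sigma>)"

definition can_map ::
  "('o,'m) cat \<Rightarrow> (nat \<Rightarrow> 'o) \<Rightarrow> (nat \<Rightarrow> nat \<Rightarrow> (nat \<Rightarrow> nat) \<Rightarrow> 'm) \<Rightarrow> nat \<Rightarrow>
   (nat \<times> (nat \<Rightarrow> nat)) set \<Rightarrow> 'o \<Rightarrow> (nat \<times> (nat \<Rightarrow> nat) \<Rightarrow> 'm) \<Rightarrow> 'm" where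
  "can_map C Xo Xm n T A a =
     (THE u. hom C (Xo n) A u \<and> (\<forall>s\<in>T. Cmp C (a s) u = can_cone Xm n s))"

definition k_category ::
  "('o,'m) cat \<Rightarrow> 'm set \<Rightarrow> nat \<Rightarrow> (nat \<Rightarrow> 'o) \<Rightarrow> (nat \<Rightarrow> nat \<Rightarrow> (nat \<Rightarrow> nat) \<Rightarrow> 'm) \<Rightarrow> bool" where
  "k_category C Cov k Xo Xm \<longleftrightarrow>
     simplicial_object C Xo Xm \<and>
     (\<forall>n i A a. 0 < i \<and> i < n \<and> is_Map C Xo Xm (horn n i) A a \<longrightarrow>
         can_map C Xo Xm n (horn n i) A a \<in> Cov \<and>
         (k < n \<longrightarrow> iso C (can_map C Xo Xm n (horn n i) A a))) \<and>
     (\<forall>A a. is_Map C Xo Xm groupoid_interval A a \<longrightarrow> a (0, \<lambda>_. 0) \<in> Cov)"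

end

theory Submission
  imports Defs
begin


locale sx =
  fixes C :: "('o,'m) cat" and Xo :: "nat \<Rightarrow> 'o" and Xm :: "nat \<Rightarrow> nat \<Rightarrow> (nat \<Rightarrow> nat) \<Rightarrow> 'm"
  assumes cat: "is_category C" and simpl: "simplicial_object C Xo Xm"
begin

lemma hom_comp: "hom C a b f \<Longrightarrow> hom C b c g \<Longrightarrow> hom C a c (Cmp C g f)"
  using cat unfolding is_category_def hom_def by metis

lemma assoc: "hom C a b f \<Longrightarrow> hom C b c g \<Longrightarrow> hom C c d h \<Longrightarrow>
   Cmp C h (Cmp C g f) = Cmp C (Cmp C h g) f"
  using cat unfolding is_category_def hom_def by metis

lemma id_l: "hom C a b f \<Longrightarrow> Cmp C (Idm C b) f = f"
  using cat unfolding is_category_def hom_def by metis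

lemma id_r: "hom C a b f \<Longrightarrow> Cmp C f (Idm C a) = f"
  using cat unfolding is_category_def hom_def by metis

lemma id_hom: "a \<in> Ob C \<Longrightarrow> hom C a a (Idm C a)"
  using cat unfolding is_category_def hom_def by metis

lemma hom_Ob: "hom C a b f \<Longrightarrow> a \<in> Ob C \<and> b \<in> Ob C"
  using cat unfolding is_category_def hom_def by metis

lemma Xo_Ob: "Xo n \<in> Ob C" using simpl unfolding simplicial_object_def by blast

lemma Xm_hom: "mono_map m n \<theta> \<Longrightarrow> hom C (Xo n) (Xo m) (Xm m n \<theta>)"
  using simpl unfolding simplicial_object_def by blast

lemma Xm_cong: "mono_map m n \<theta> \<Longrightarrow> (\<And>i. i \<le> m \<Longrightarrow> \<theta> i = \<theta>' i) \<Longrightarrow> Xm m n \<theta> = Xm m n \<theta>'"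
  using simpl unfolding simplicial_object_def by blast

lemma Xm_comp: "mono_map l m \<phi> \<Longrightarrow> mono_map m n \<theta> \<Longrightarrow>
   Cmp C (Xm l m \<phi>) (Xm m n \<theta>) = Xm l n (\<theta> \<circ> \<phi>)"
  using simpl unfolding simplicial_object_def by metis

lemma Xm_id: "Xm n n (\<lambda>i. i) = Idm C (Xo n)"
  using simpl unfolding simplicial_object_def by blast

lemma mono_comp: "mono_map l m \<phi> \<Longrightarrow> mono_map m n \<theta> \<Longrightarrow> mono_map l n (\<theta> \<circ> \<phi>)"
  unfolding mono_map_def by auto

lemma mono_restr: "mono_map m n \<theta> \<Longrightarrow> mono_map m n (restr m \<theta>)"
  unfolding mono_map_def restr_def by auto

lemma mono_restr_iff: "mono_map m n (restr m \<theta>) = mono_map m n \<theta>"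
  unfolding mono_map_def restr_def by auto

lemma cone_hom: "is_cone C Xo Xm T A a \<Longrightarrow> (m,\<sigma>) \<in> T \<Longrightarrow> hom C A (Xo m) (a (m,\<sigma>))"
  unfolding is_cone_def by blast

lemma cone_Ob: "is_cone C Xo Xm T A a \<Longrightarrow> A \<in> Ob C"
  unfolding is_cone_def by blast

lemma cone_comm: "is_cone C Xo Xm T A a \<Longrightarrow> (m,\<sigma>) \<in> T \<Longrightarrow> mono_map m' m \<theta> \<Longrightarrow>
   Cmp C (Xm m' m \<theta>) (a (m,\<sigma>)) = a (m', restr m' (\<sigma> \<circ> \<theta>))"
  unfolding is_cone_def by blast

lemma coneI:
  assumes "A \<in> Ob C" "\<And>m \<sigma>. (m,\<sigma>) \<in> T \<Longrightarrow> hom C A (Xo m) (a (m,\<sigma>))"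
    "\<And>m \<sigma> m' \<theta>. (m,\<sigma>) \<in> T \<Longrightarrow> mono_map m' m \<theta> \<Longrightarrow>
       Cmp C (Xm m' m \<theta>) (a (m,\<sigma>)) = a (m', restr m' (\<sigma> \<circ> \<theta>))"
  shows "is_cone C Xo Xm T A a"
  using assms unfolding is_cone_def by auto

lemma cone_sub: "is_cone C Xo Xm T A a \<Longrightarrow> T' \<subseteq> T \<Longrightarrow> is_cone C Xo Xm T' A a"
  unfolding is_cone_def by blast

lemma cone_cmp:
  assumes c: "is_cone C Xo Xm T A a" and f: "hom C B A f"
  shows "is_cone C Xo Xm T B (\<lambda>s. Cmp C (a s) f)"
proof (rule coneI)
  show "B \<in> Ob C" using hom_Ob[OF f] by blast
next
  fix m \<sigma> assume "(m,\<sigma>) \<in> T"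
  then show "hom C B (Xo m) (Cmp C (a (m,\<sigma>)) f)" using hom_comp[OF f cone_hom[OF c]] by blast
next
  fix m \<sigma> m' \<theta> assume s: "(m,\<sigma>) \<in> T" and th: "mono_map m' m \<theta>"
  have "Cmp C (Xm m' m \<theta>) (Cmp C (a (m,\<sigma>)) f) = Cmp C (Cmp C (Xm m' m \<theta>) (a (m,\<sigma>))) f"
    using assoc[OF f cone_hom[OF c s] Xm_hom[OF th]] .
  also have "\<dots> = Cmp C (a (m', restr m' (\<sigma> \<circ> \<theta>))) f" using cone_comm[OF c s th] by simp
  finally show "Cmp C (Xm m' m \<theta>) (Cmp C (a (m,\<sigma>)) f) = Cmp C (a (m', restr m' (\<sigma> \<circ> \<theta>))) f" .
qed

lemma Map_cone: "is_Map C Xo Xm T A a \<Longrightarrow> is_cone C Xo Xm T A a"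
  unfolding is_Map_def by blast

lemma Map_ex: "is_Map C Xo Xm T A a \<Longrightarrow> is_cone C Xo Xm T B b \<Longrightarrow>
   \<exists>u. hom C B A u \<and> (\<forall>s\<in>T. Cmp C (a s) u = b s)"
  unfolding is_Map_def by blast

lemma Map_uniq:
  assumes M: "is_Map C Xo Xm T A a" and u1: "hom C B A u1" and u2: "hom C B A u2"
    and e: "\<And>s. s \<in> T \<Longrightarrow> Cmp C (a s) u1 = Cmp C (a s) u2"
  shows "u1 = u2"
proof -
  have c: "is_cone C Xo Xm T B (\<lambda>s. Cmp C (a s) u1)" using cone_cmp[OF Map_cone[OF M] u1] .
  then have "\<exists>!u. hom C B A u \<and> (\<forall>s\<in>T. Cmp C (a s) u = Cmp C (a s) u1)"
    using M unfolding is_Map_def by blast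
  then show ?thesis using u1 u2 e by metis
qed

lemma MapI:
  assumes c: "is_cone C Xo Xm T A a"
    and ex: "\<And>B b. is_cone C Xo Xm T B b \<Longrightarrow> \<exists>u. hom C B A u \<and> (\<forall>s\<in>T. Cmp C (a s) u = b s)"
    and un: "\<And>B u1 u2. hom C B A u1 \<Longrightarrow> hom C B A u2 \<Longrightarrow> (\<forall>s\<in>T. Cmp C (a s) u1 = Cmp C (a s) u2) \<Longrightarrow> u1 = u2"
  shows "is_Map C Xo Xm T A a"
  unfolding is_Map_def
proof (intro conjI allI impI c)
  fix B b assume b: "is_cone C Xo Xm T B b"
  obtain u where u: "hom C B A u" "\<forall>s\<in>T. Cmp C (a s) u = b s" using ex[OF b] by blast
  show "\<exists>!u. hom C B A u \<and> (\<forall>s\<in>T. Cmp C (a s) u = b s)"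
  proof (rule ex1I[of _ u])
    show "hom C B A u \<and> (\<forall>s\<in>T. Cmp C (a s) u = b s)" using u by blast
  next
    fix v assume "hom C B A v \<and> (\<forall>s\<in>T. Cmp C (a s) v = b s)"
    then show "v = u" using un[of B v u] u by auto
  qed
qed

lemma can_cone_cone:
  assumes "T \<subseteq> simplex_set n"
  shows "is_cone C Xo Xm T (Xo n) (can_cone Xm n)"
proof (rule coneI)
  show "Xo n \<in> Ob C" by (rule Xo_Ob)
next
  fix m \<sigma> assume "(m,\<sigma>) \<in> T"
  then have "mono_map m n \<sigma>" using assms unfolding simplex_set_def by auto
  then show "hom C (Xo n) (Xo m) (can_cone Xm n (m,\<sigma>))" unfolding can_cone_def by (simp add: Xm_hom)
next
  fix m \<sigma> m' \<theta> assume s: "(m,\<sigma>) \<in> T" and th: "mono_map m' m \<theta>"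
  then have sm: "mono_map m n \<sigma>" using assms unfolding simplex_set_def by auto
  have "Cmp C (Xm m' m \<theta>) (Xm m n \<sigma>) = Xm m' n (\<sigma> \<circ> \<theta>)" by (rule Xm_comp[OF th sm])
  also have "\<dots> = Xm m' n (restr m' (\<sigma> \<circ> \<theta>))"
    by (rule Xm_cong[OF mono_comp[OF th sm]]) (simp add: restr_def)
  finally show "Cmp C (Xm m' m \<theta>) (can_cone Xm n (m,\<sigma>)) = can_cone Xm n (m', restr m' (\<sigma> \<circ> \<theta>))"
    unfolding can_cone_def by simp
qed

lemma can_map_prop:
  assumes M: "is_Map C Xo Xm T A a" and T: "T \<subseteq> simplex_set n"
  shows "hom C (Xo n) A (can_map C Xo Xm n T A a) \<and>
         (\<forall>s\<in>T. Cmp C (a s) (can_map C Xo Xm n T A a) = can_cone Xm n s)"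
proof -
  have "\<exists>!u. hom C (Xo n) A u \<and> (\<forall>s\<in>T. Cmp C (a s) u = can_cone Xm n s)"
    using M can_cone_cone[OF T] unfolding is_Map_def by blast
  then show ?thesis unfolding can_map_def by (rule theI')
qed

lemma iso_cancel:
  assumes i: "iso C c" and c: "hom C X A c" and u1: "hom C B X u1" and u2: "hom C B X u2"
    and e: "Cmp C c u1 = Cmp C c u2"
  shows "u1 = u2"
proof -
  obtain g where g: "hom C A X g" "Cmp C g c = Idm C X"
    using i c unfolding iso_def hom_def by metis
  have "u1 = Cmp C (Cmp C g c) u1" using g id_l[OF u1] by simp
  also have "\<dots> = Cmp C g (Cmp C c u1)" using assoc[OF u1 c g(1)] by simp
  also have "\<dots> = Cmp C g (Cmp C c u2)" using e by simp
  also have "\<dots> = Cmp C (Cmp C g c) u2" using assoc[OF u2 c g(1)] by simp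
  also have "\<dots> = u2" using g id_l[OF u2] by simp
  finally show ?thesis .
qed

lemma two_limits_iso:
  assumes M1: "is_Map C Xo Xm T X x" and M2: "is_Map C Xo Xm T A a"
    and c: "hom C X A c" and cc: "\<forall>s\<in>T. Cmp C (a s) c = x s"
  shows "iso C c"
proof -
  obtain g where g: "hom C A X g" "\<forall>s\<in>T. Cmp C (x s) g = a s"
    using Map_ex[OF M1 Map_cone[OF M2]] by blast
  have XO: "X \<in> Ob C" and AO: "A \<in> Ob C" using hom_Ob[OF c] by auto
  have gc: "hom C X X (Cmp C g c)" using hom_comp[OF c g(1)] .
  have cg: "hom C A A (Cmp C c g)" using hom_comp[OF g(1) c] .
  have 1: "Cmp C g c = Idm C X"
  proof (rule Map_uniq[OF M1 gc id_hom[OF XO]])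
    fix s assume s: "s \<in> T"
    obtain m \<sigma> where sp: "s = (m,\<sigma>)" by (cases s)
    have xs: "hom C X (Xo m) (x s)" using cone_hom[OF Map_cone[OF M1]] s sp by blast
    have "Cmp C (x s) (Cmp C g c) = Cmp C (Cmp C (x s) g) c" using assoc[OF c g(1)] xs by simp
    also have "\<dots> = x s" using g cc s by simp
    also have "\<dots> = Cmp C (x s) (Idm C X)" using id_r[OF xs] by simp
    finally show "Cmp C (x s) (Cmp C g c) = Cmp C (x s) (Idm C X)" .
  qed
  have 2: "Cmp C c g = Idm C A"
  proof (rule Map_uniq[OF M2 cg id_hom[OF AO]])
    fix s assume s: "s \<in> T"
    obtain m \<sigma> where sp: "s = (m,\<sigma>)" by (cases s)
    have xs: "hom C A (Xo m) (a s)" using cone_hom[OF Map_cone[OF M2]] s sp by blast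
    have "Cmp C (a s) (Cmp C c g) = Cmp C (Cmp C (a s) c) g" using assoc[OF g(1) c] xs by simp
    also have "\<dots> = a s" using g cc s by simp
    also have "\<dots> = Cmp C (a s) (Idm C A)" using id_r[OF xs] by simp
    finally show "Cmp C (a s) (Cmp C c g) = Cmp C (a s) (Idm C A)" .
  qed
  show ?thesis unfolding iso_def using c g(1) 1 2 unfolding hom_def by auto
qed

end


definition rk :: "nat set \<Rightarrow> nat \<Rightarrow> nat" where "rk S x = card {y\<in>S. y < x}"
definition en :: "nat set \<Rightarrow> nat \<Rightarrow> nat" where "en S = inv_into S (rk S)"

lemma rk_mono: "finite S \<Longrightarrow> x \<le> y \<Longrightarrow> rk S x \<le> rk S y"
  unfolding rk_def by (rule card_mono) auto

lemma rk_strict: "finite S \<Longrightarrow> x \<in> S \<Longrightarrow> x < y \<Longrightarrow> rk S x < rk S y"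
  unfolding rk_def by (rule psubset_card_mono) auto

lemma rk_lt: "finite S \<Longrightarrow> x \<in> S \<Longrightarrow> rk S x < card S"
  unfolding rk_def by (rule psubset_card_mono) auto

lemma rk_inj: "finite S \<Longrightarrow> inj_on (rk S) S"
  unfolding inj_on_def by (metis linorder_neqE_nat rk_strict less_irrefl)

lemma rk_img: "finite S \<Longrightarrow> rk S ` S = {..<card S}"
proof -
  assume f: "finite S"
  have "rk S ` S \<subseteq> {..<card S}" using rk_lt[OF f] by auto
  moreover have "card (rk S ` S) = card {..<card S}" using card_image[OF rk_inj[OF f]] by simp
  ultimately show ?thesis by (simp add: card_subset_eq)
qed

lemma en_in: "finite S \<Longrightarrow> i < card S \<Longrightarrow> en S i \<in> S"
  unfolding en_def by (rule inv_into_into) (simp add: rk_img)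

lemma rk_en: "finite S \<Longrightarrow> i < card S \<Longrightarrow> rk S (en S i) = i"
  unfolding en_def by (rule f_inv_into_f) (simp add: rk_img)

lemma en_rk: "finite S \<Longrightarrow> x \<in> S \<Longrightarrow> en S (rk S x) = x"
  unfolding en_def by (rule inv_into_f_f[OF rk_inj]) auto

lemma en_mono: "finite S \<Longrightarrow> i \<le> j \<Longrightarrow> j < card S \<Longrightarrow> en S i \<le> en S j"
proof (rule ccontr)
  assume f: "finite S" and ij: "i \<le> j" "j < card S" and "\<not> en S i \<le> en S j"
  then have "en S j < en S i" by simp
  then have "rk S (en S j) < rk S (en S i)" using rk_strict[OF f en_in[OF f ij(2)]] by blast
  then show False using rk_en[OF f] ij by (metis le_less_trans not_le)
qed

definition dclosed :: "(nat \<times> (nat \<Rightarrow> nat)) set \<Rightarrow> bool" where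
  "dclosed T \<longleftrightarrow> (\<forall>m \<sigma> m' \<theta>. (m,\<sigma>) \<in> T \<longrightarrow> mono_map m' m \<theta> \<longrightarrow> (m', restr m' (\<sigma> \<circ> \<theta>)) \<in> T)"

definition gen :: "nat set list \<Rightarrow> (nat \<times> (nat \<Rightarrow> nat)) set" where
  "gen Fs = {(m,\<sigma>). (\<forall>i j. i \<le> j \<and> j \<le> m \<longrightarrow> \<sigma> i \<le> \<sigma> j) \<and> normal m \<sigma> \<and> (\<exists>F\<in>set Fs. \<sigma> ` {0..m} \<subseteq> F)}"

lemma gen_dclosed: "dclosed (gen Fs)"
  unfolding dclosed_def gen_def mono_map_def restr_def normal_def
  apply (clarsimp)
  subgoal for m \<sigma> m' \<theta> x by (rule bexI[of _ x]) (auto simp: subset_iff)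
  done

lemma gen_Cons: "gen (F # Fs) = gen [F] \<union> gen Fs"
  unfolding gen_def by auto

lemma gen_Int: "gen [F] \<inter> gen Fs = gen (map (\<lambda>G. F \<inter> G) Fs)"
  unfolding gen_def by auto

locale sxl = sx +
  assumes fl: "has_finite_limits C"
begin

lemma Map_empty: "\<exists>A a. is_Map C Xo Xm {} A a"
proof -
  obtain t where t: "is_terminal C t" using fl unfolding has_finite_limits_def by blast
  have "is_Map C Xo Xm {} t (\<lambda>_. undefined)"
  proof (rule MapI)
    show "is_cone C Xo Xm {} t (\<lambda>_. undefined)" using t unfolding is_cone_def is_terminal_def by auto
  next
    fix B b assume "is_cone C Xo Xm {} B b"
    then have "B \<in> Ob C" by (rule cone_Ob)
    then show "\<exists>u. hom C B t u \<and> (\<forall>s\<in>{}. Cmp C undefined u = b s)" using t unfolding is_terminal_def by auto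
  next
    fix B u1 u2 assume "hom C B t u1" "hom C B t u2"
    then show "u1 = u2" using t hom_Ob unfolding is_terminal_def by blast
  qed
  then show ?thesis by blast
qed

lemma Map_face:
  assumes f: "finite F" and ne: "F \<noteq> {}"
  shows "\<exists>A a. is_Map C Xo Xm (gen [F]) A a"
proof -
  define d where "d = card F - 1"
  have cF: "card F = Suc d" using f ne unfolding d_def by (simp add: card_gt_0_iff)
  define a where "a = (\<lambda>(m::nat,\<sigma>::nat\<Rightarrow>nat). Xm m d (restr m (rk F \<circ> \<sigma>)))"
  have memg: "\<And>m \<sigma>. (m,\<sigma>) \<in> gen [F] \<longleftrightarrow> (\<forall>i j. i \<le> j \<and> j \<le> m \<longrightarrow> \<sigma> i \<le> \<sigma> j) \<and> normal m \<sigma> \<and> \<sigma> ` {0..m} \<subseteq> F"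
    unfolding gen_def by auto
  have mm: "mono_map m d (restr m (rk F \<circ> \<sigma>))" if "(m,\<sigma>) \<in> gen [F]" for m \<sigma>
  proof -
    have "\<forall>i\<le>m. rk F (\<sigma> i) \<le> d" using that rk_lt[OF f] cF unfolding memg
      by (metis atLeastAtMost_iff image_subset_iff le0 less_Suc_eq_le)
    moreover have "\<forall>i j. i \<le> j \<and> j \<le> m \<longrightarrow> rk F (\<sigma> i) \<le> rk F (\<sigma> j)"
      using that rk_mono[OF f] unfolding memg by blast
    ultimately show ?thesis unfolding mono_map_def restr_def by auto
  qed
  define \<iota> where "\<iota> = restr d (en F)"
  have iota_mem: "(d, \<iota>) \<in> gen [F]" unfolding memg \<iota>_def
  proof (intro conjI allI impI)
    fix i j assume "i \<le> j \<and> j \<le> d" then show "restr d (en F) i \<le> restr d (en F) j"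
      unfolding restr_def using en_mono[OF f] cF by auto
  next
    show "normal d (restr d (en F))" unfolding normal_def restr_def by auto
  next
    show "restr d (en F) ` {0..d} \<subseteq> F" unfolding restr_def using en_in[OF f] cF by auto
  qed
  have acone: "is_cone C Xo Xm (gen [F]) (Xo d) a"
  proof (rule coneI)
    show "Xo d \<in> Ob C" by (rule Xo_Ob)
  next
    fix m \<sigma> assume "(m,\<sigma>) \<in> gen [F]" then show "hom C (Xo d) (Xo m) (a (m,\<sigma>))"
      unfolding a_def using Xm_hom[OF mm] by simp
  next
    fix m \<sigma> m' \<theta> assume s: "(m,\<sigma>) \<in> gen [F]" and th: "mono_map m' m \<theta>"
    have "Cmp C (Xm m' m \<theta>) (a (m,\<sigma>)) = Xm m' d (restr m (rk F \<circ> \<sigma>) \<circ> \<theta>)"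
      unfolding a_def using Xm_comp[OF th mm[OF s]] by simp
    also have "\<dots> = Xm m' d (restr m' (rk F \<circ> restr m' (\<sigma> \<circ> \<theta>)))"
      by (rule Xm_cong[OF mono_comp[OF th mm[OF s]]]) (use th in \<open>auto simp: restr_def mono_map_def\<close>)
    finally show "Cmp C (Xm m' m \<theta>) (a (m,\<sigma>)) = a (m', restr m' (\<sigma> \<circ> \<theta>))" unfolding a_def by simp
  qed
  have a_iota: "a (d,\<iota>) = Idm C (Xo d)"
  proof -
    have "a (d,\<iota>) = Xm d d (\<lambda>i. i)" unfolding a_def
      by (simp, rule Xm_cong[OF mm[OF iota_mem]]) (use cF rk_en[OF f] in \<open>auto simp: restr_def \<iota>_def\<close>)
    then show ?thesis by (simp add: Xm_id)
  qed
  have "is_Map C Xo Xm (gen [F]) (Xo d) a"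
  proof (rule MapI[OF acone])
    fix B b assume b: "is_cone C Xo Xm (gen [F]) B b"
    show "\<exists>u. hom C B (Xo d) u \<and> (\<forall>s\<in>gen [F]. Cmp C (a s) u = b s)"
    proof (intro exI conjI ballI)
      show "hom C B (Xo d) (b (d,\<iota>))" using cone_hom[OF b iota_mem] .
    next
      fix s assume s: "s \<in> gen [F]"
      obtain m \<sigma> where sp: "s = (m,\<sigma>)" by (cases s)
      have "Cmp C (a s) (b (d,\<iota>)) = b (m, restr m (\<iota> \<circ> restr m (rk F \<circ> \<sigma>)))"
        unfolding sp a_def using cone_comm[OF b iota_mem mm[OF s[unfolded sp]]] by simp
      also have "restr m (\<iota> \<circ> restr m (rk F \<circ> \<sigma>)) = \<sigma>"
      proof
        fix i show "restr m (\<iota> \<circ> restr m (rk F \<circ> \<sigma>)) i = \<sigma> i"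
        proof (cases "i \<le> m")
          case True
          then have "\<sigma> i \<in> F" using s unfolding sp memg by auto
          then show ?thesis using True rk_lt[OF f] en_rk[OF f] cF
            unfolding restr_def \<iota>_def by (auto simp: less_Suc_eq_le)
        next
          case False then show ?thesis using s unfolding sp memg normal_def restr_def by auto
        qed
      qed
      finally show "Cmp C (a s) (b (d,\<iota>)) = b s" unfolding sp .
    qed
  next
    fix B u1 u2 assume u: "hom C B (Xo d) u1" "hom C B (Xo d) u2"
      "\<forall>s\<in>gen [F]. Cmp C (a s) u1 = Cmp C (a s) u2"
    then show "u1 = u2" using iota_mem a_iota id_l by metis
  qed
  then show ?thesis by blast
qed

lemma Map_face0:
  assumes f: "finite F"
  shows "\<exists>A a. is_Map C Xo Xm (gen [F]) A a"
proof (cases "F = {}")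
  case True
  then have "gen [F] = {}" unfolding gen_def by auto
  then show ?thesis using Map_empty by simp
next
  case False then show ?thesis using Map_face[OF f] by blast
qed

end


lemma horn_gen: "horn n i = gen (map (\<lambda>j. {0..n} - {j}) (filter (\<lambda>j. j \<noteq> i) [0..<Suc n]))"
proof (intro set_eqI)
  fix x :: "nat \<times> (nat \<Rightarrow> nat)"
  obtain m \<sigma> where x: "x = (m,\<sigma>)" by (cases x)
  have "(\<exists>F\<in>set (map (\<lambda>j. {0..n} - {j}) (filter (\<lambda>j. j \<noteq> i) [0..<Suc n])). \<sigma> ` {0..m} \<subseteq> F)
     \<longleftrightarrow> (\<exists>j\<le>n. j \<noteq> i \<and> \<sigma> ` {0..m} \<subseteq> {0..n} - {j})" by (auto simp del: upt_Suc simp add: less_Suc_eq_le)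
  also have "\<dots> \<longleftrightarrow> (\<forall>k\<le>m. \<sigma> k \<le> n) \<and> (\<exists>j\<le>n. j \<noteq> i \<and> j \<notin> \<sigma> ` {0..m})" by (auto simp: subset_iff)
  finally have e: "(\<exists>F\<in>set (map (\<lambda>j. {0..n} - {j}) (filter (\<lambda>j. j \<noteq> i) [0..<Suc n])). \<sigma> ` {0..m} \<subseteq> F)
     \<longleftrightarrow> (\<forall>k\<le>m. \<sigma> k \<le> n) \<and> (\<exists>j\<le>n. j \<noteq> i \<and> j \<notin> \<sigma> ` {0..m})" .
  show "x \<in> horn n i \<longleftrightarrow> x \<in> gen (map (\<lambda>j. {0..n} - {j}) (filter (\<lambda>j. j \<noteq> i) [0..<Suc n]))"
    unfolding x horn_def gen_def simplex_set_def mono_map_def mem_Collect_eq case_prod_conv e by blast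
qed

context sxl begin

lemma pb_ex: "r1 \<in> Ar C \<Longrightarrow> r2 \<in> Ar C \<Longrightarrow> Cod C r1 = Cod C r2 \<Longrightarrow> \<exists>p q. is_pullback C r1 r2 p q"
  using fl unfolding has_finite_limits_def by blast

lemma Map_union:
  assumes d1: "dclosed T1" and d2: "dclosed T2"
    and M1: "is_Map C Xo Xm T1 A1 a1" and M2: "is_Map C Xo Xm T2 A2 a2"
    and M0: "is_Map C Xo Xm (T1 \<inter> T2) A0 a0"
  shows "\<exists>A a. is_Map C Xo Xm (T1 \<union> T2) A a"
proof -
  obtain r1 where r1: "hom C A1 A0 r1" "\<forall>s\<in>T1 \<inter> T2. Cmp C (a0 s) r1 = a1 s"
    using Map_ex[OF M0 cone_sub[OF Map_cone[OF M1]]] by blast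
  obtain r2 where r2: "hom C A2 A0 r2" "\<forall>s\<in>T1 \<inter> T2. Cmp C (a0 s) r2 = a2 s"
    using Map_ex[OF M0 cone_sub[OF Map_cone[OF M2]]] by blast
  obtain p q where pb: "is_pullback C r1 r2 p q"
    using pb_ex r1(1) r2(1) unfolding hom_def by metis
  define P where "P = Dom C p"
  have p: "hom C P A1 p" and q: "hom C P A2 q" and pq: "Cmp C r1 p = Cmp C r2 q"
    using pb r1(1) r2(1) unfolding is_pullback_def P_def hom_def by auto
  have pbu: "\<And>B p' q'. hom C B A1 p' \<Longrightarrow> hom C B A2 q' \<Longrightarrow> Cmp C r1 p' = Cmp C r2 q' \<Longrightarrow>
      \<exists>!u. hom C B P u \<and> Cmp C p u = p' \<and> Cmp C q u = q'"
  proof -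
    fix B p' q' assume h: "hom C B A1 p'" "hom C B A2 q'" "Cmp C r1 p' = Cmp C r2 q'"
    then have "hom C (Dom C p') (Dom C r1) p' \<and> hom C (Dom C p') (Dom C r2) q' \<and>
        Dom C q' = Dom C p' \<and> Cmp C r1 p' = Cmp C r2 q'" using r1(1) r2(1) unfolding hom_def by auto
    then have "\<exists>!u. hom C (Dom C p') (Dom C p) u \<and> Cmp C p u = p' \<and> Cmp C q u = q'"
      using pb unfolding is_pullback_def by blast
    then show "\<exists>!u. hom C B P u \<and> Cmp C p u = p' \<and> Cmp C q u = q'"
      using h unfolding P_def hom_def by simp
  qed
  have c1: "is_cone C Xo Xm T1 A1 a1" and c2: "is_cone C Xo Xm T2 A2 a2"
    using M1 M2 by (auto dest: Map_cone)
  have agree: "Cmp C (a1 s) p = Cmp C (a2 s) q" if s: "s \<in> T1 \<inter> T2" for s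
  proof -
    obtain m \<sigma> where sp: "s = (m,\<sigma>)" by (cases s)
    have a0s: "hom C A0 (Xo m) (a0 s)" using cone_hom[OF Map_cone[OF M0]] s sp by blast
    have "Cmp C (a1 s) p = Cmp C (Cmp C (a0 s) r1) p" using r1 s by simp
    also have "\<dots> = Cmp C (a0 s) (Cmp C r1 p)" using assoc[OF p r1(1) a0s] by simp
    also have "\<dots> = Cmp C (a0 s) (Cmp C r2 q)" using pq by simp
    also have "\<dots> = Cmp C (Cmp C (a0 s) r2) q" using assoc[OF q r2(1) a0s] by simp
    also have "\<dots> = Cmp C (a2 s) q" using r2 s by simp
    finally show ?thesis .
  qed
  define a where "a = (\<lambda>s. if s \<in> T1 then Cmp C (a1 s) p else Cmp C (a2 s) q)"
  have acone: "is_cone C Xo Xm (T1 \<union> T2) P a"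
  proof (rule coneI)
    show "P \<in> Ob C" using hom_Ob[OF p] by blast
  next
    fix m \<sigma> assume "(m,\<sigma>) \<in> T1 \<union> T2"
    then show "hom C P (Xo m) (a (m,\<sigma>))" unfolding a_def
      using hom_comp[OF p cone_hom[OF c1]] hom_comp[OF q cone_hom[OF c2]] by auto
  next
    fix m \<sigma> m' \<theta> assume s: "(m,\<sigma>) \<in> T1 \<union> T2" and th: "mono_map m' m \<theta>"
    show "Cmp C (Xm m' m \<theta>) (a (m,\<sigma>)) = a (m', restr m' (\<sigma> \<circ> \<theta>))"
    proof (cases "(m,\<sigma>) \<in> T1")
      case True
      then have s': "(m', restr m' (\<sigma> \<circ> \<theta>)) \<in> T1" using d1 th unfolding dclosed_def by blast
      have "Cmp C (Xm m' m \<theta>) (Cmp C (a1 (m,\<sigma>)) p) = Cmp C (Cmp C (Xm m' m \<theta>) (a1 (m,\<sigma>))) p"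
        using assoc[OF p cone_hom[OF c1 True] Xm_hom[OF th]] .
      then show ?thesis unfolding a_def using True s' cone_comm[OF c1 True th] by simp
    next
      case False
      then have T2: "(m,\<sigma>) \<in> T2" using s by blast
      then have s': "(m', restr m' (\<sigma> \<circ> \<theta>)) \<in> T2" using d2 th unfolding dclosed_def by blast
      have "Cmp C (Xm m' m \<theta>) (Cmp C (a2 (m,\<sigma>)) q) = Cmp C (Cmp C (Xm m' m \<theta>) (a2 (m,\<sigma>))) q"
        using assoc[OF q cone_hom[OF c2 T2] Xm_hom[OF th]] .
      then show ?thesis unfolding a_def using False s' cone_comm[OF c2 T2 th] agree by auto
    qed
  qed
  have "is_Map C Xo Xm (T1 \<union> T2) P a"
  proof (rule MapI[OF acone])
    fix B b assume b: "is_cone C Xo Xm (T1 \<union> T2) B b"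
    obtain u1 where u1: "hom C B A1 u1" "\<forall>s\<in>T1. Cmp C (a1 s) u1 = b s"
      using Map_ex[OF M1 cone_sub[OF b]] by blast
    obtain u2 where u2: "hom C B A2 u2" "\<forall>s\<in>T2. Cmp C (a2 s) u2 = b s"
      using Map_ex[OF M2 cone_sub[OF b]] by blast
    have e: "Cmp C r1 u1 = Cmp C r2 u2"
    proof (rule Map_uniq[OF M0 hom_comp[OF u1(1) r1(1)] hom_comp[OF u2(1) r2(1)]])
      fix s assume s: "s \<in> T1 \<inter> T2"
      obtain m \<sigma> where sp: "s = (m,\<sigma>)" by (cases s)
      have a0s: "hom C A0 (Xo m) (a0 s)" using cone_hom[OF Map_cone[OF M0]] s sp by blast
      have "Cmp C (a0 s) (Cmp C r1 u1) = b s"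
        using assoc[OF u1(1) r1(1) a0s] r1(2) u1(2) s by simp
      moreover have "Cmp C (a0 s) (Cmp C r2 u2) = b s"
        using assoc[OF u2(1) r2(1) a0s] r2(2) u2(2) s by simp
      ultimately show "Cmp C (a0 s) (Cmp C r1 u1) = Cmp C (a0 s) (Cmp C r2 u2)" by simp
    qed
    obtain u where u: "hom C B P u" "Cmp C p u = u1" "Cmp C q u = u2"
      using pbu[OF u1(1) u2(1) e] by blast
    show "\<exists>u. hom C B P u \<and> (\<forall>s\<in>T1 \<union> T2. Cmp C (a s) u = b s)"
    proof (intro exI conjI ballI)
      show "hom C B P u" by fact
    next
      fix s assume s: "s \<in> T1 \<union> T2"
      obtain m \<sigma> where sp: "s = (m,\<sigma>)" by (cases s)
      show "Cmp C (a s) u = b s"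
      proof (cases "s \<in> T1")
        case True
        have h: "hom C A1 (Xo m) (a1 s)" using cone_hom[OF c1] True sp by blast
        have "Cmp C (Cmp C (a1 s) p) u = Cmp C (a1 s) (Cmp C p u)" using assoc[OF u(1) p h] by simp
        then show ?thesis unfolding a_def using True u u1 by simp
      next
        case False
        then have "s \<in> T2" using s by blast
        then have h: "hom C A2 (Xo m) (a2 s)" using cone_hom[OF c2] sp by blast
        have "Cmp C (Cmp C (a2 s) q) u = Cmp C (a2 s) (Cmp C q u)" using assoc[OF u(1) q h] by simp
        then show ?thesis unfolding a_def using False \<open>s \<in> T2\<close> u u2 by simp
      qed
    qed
  next
    fix B v1 v2 assume v: "hom C B P v1" "hom C B P v2" "\<forall>s\<in>T1 \<union> T2. Cmp C (a s) v1 = Cmp C (a s) v2"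
    have ep: "Cmp C p v1 = Cmp C p v2"
    proof (rule Map_uniq[OF M1 hom_comp[OF v(1) p] hom_comp[OF v(2) p]])
      fix s assume s: "s \<in> T1"
      obtain m \<sigma> where sp: "s = (m,\<sigma>)" by (cases s)
      have h: "hom C A1 (Xo m) (a1 s)" using cone_hom[OF c1] s sp by blast
      have "Cmp C (a s) v1 = Cmp C (a s) v2" using bspec[OF v(3), of s] s by simp
      then show "Cmp C (a1 s) (Cmp C p v1) = Cmp C (a1 s) (Cmp C p v2)"
        using s assoc[OF v(1) p h] assoc[OF v(2) p h] by (simp add: a_def)
    qed
    have eq: "Cmp C q v1 = Cmp C q v2"
    proof (rule Map_uniq[OF M2 hom_comp[OF v(1) q] hom_comp[OF v(2) q]])
      fix s assume s: "s \<in> T2"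
      obtain m \<sigma> where sp: "s = (m,\<sigma>)" by (cases s)
      have h: "hom C A2 (Xo m) (a2 s)" using cone_hom[OF c2] s sp by blast
      show "Cmp C (a2 s) (Cmp C q v1) = Cmp C (a2 s) (Cmp C q v2)"
      proof (cases "s \<in> T1")
        case True
        have h1: "hom C A1 (Xo m) (a1 s)" using cone_hom[OF c1] True sp by blast
        have "Cmp C (a2 s) (Cmp C q v1) = Cmp C (Cmp C (a1 s) p) v1"
          using assoc[OF v(1) q h] agree[of s] True s by simp
        also have "\<dots> = Cmp C (Cmp C (a1 s) p) v2" using bspec[OF v(3), of s] s True unfolding a_def by simp
        also have "\<dots> = Cmp C (a2 s) (Cmp C q v2)"
          using assoc[OF v(2) q h] agree[of s] True s by simp
        finally show ?thesis .
      next
        case False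
        have "Cmp C (a s) v1 = Cmp C (a s) v2" using bspec[OF v(3), of s] s by simp
        then show ?thesis using False assoc[OF v(1) q h] assoc[OF v(2) q h] by (simp add: a_def)
      qed
    qed
    have e2: "Cmp C r1 (Cmp C p v1) = Cmp C r2 (Cmp C q v1)"
      using assoc[OF v(1) p r1(1)] assoc[OF v(1) q r2(1)] pq by simp
    have U: "\<exists>!u. hom C B P u \<and> Cmp C p u = Cmp C p v1 \<and> Cmp C q u = Cmp C q v1"
      by (rule pbu[OF hom_comp[OF v(1) p] hom_comp[OF v(1) q] e2])
    have w1: "v1 = (THE u. hom C B P u \<and> Cmp C p u = Cmp C p v1 \<and> Cmp C q u = Cmp C q v1)"
      by (rule the1_equality[OF U, symmetric]) (simp add: v(1))
    have w2: "v2 = (THE u. hom C B P u \<and> Cmp C p u = Cmp C p v1 \<and> Cmp C q u = Cmp C q v1)"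
      by (rule the1_equality[OF U, symmetric]) (simp add: v(2) ep eq)
    show "v1 = v2" using w1 w2 by simp
  qed
  then show ?thesis by blast
qed

lemma Map_gen_aux: "\<forall>Fs. length Fs = n \<longrightarrow> (\<forall>F\<in>set Fs. finite F) \<longrightarrow> (\<exists>A a. is_Map C Xo Xm (gen Fs) A a)"
proof (induction n)
  case 0
  show ?case
  proof (intro allI impI)
    fix Fs :: "nat set list" assume "length Fs = 0"
    then have "gen Fs = {}" unfolding gen_def by auto
    then show "\<exists>A a. is_Map C Xo Xm (gen Fs) A a" using Map_empty by simp
  qed
next
  case (Suc n)
  show ?case
  proof (intro allI impI)
    fix Fs :: "nat set list" assume l: "length Fs = Suc n" and fin: "\<forall>F\<in>set Fs. finite F"
    then obtain F Gs where Cons: "Fs = F # Gs" by (cases Fs) auto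
    have lG: "length Gs = n" using l Cons by simp
    have fF: "finite F" using fin Cons by simp
    have fG: "\<forall>F\<in>set Gs. finite F" using fin Cons by simp
    have lG': "length (map (\<lambda>G. F \<inter> G) Gs) = n" using lG by simp
    have fG': "\<forall>H\<in>set (map (\<lambda>G. F \<inter> G) Gs). finite H" using fF by auto
    obtain A1 a1 where M1: "is_Map C Xo Xm (gen [F]) A1 a1" using Map_face0[OF fF] by blast
    obtain A2 a2 where M2: "is_Map C Xo Xm (gen Gs) A2 a2" using Suc.IH lG fG by blast
    obtain A0 a0 where M0: "is_Map C Xo Xm (gen (map (\<lambda>G. F \<inter> G) Gs)) A0 a0"
      using Suc.IH lG' fG' by blast
    have M0': "is_Map C Xo Xm (gen [F] \<inter> gen Gs) A0 a0" using M0 gen_Int by metis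
    have e: "gen Fs = gen [F] \<union> gen Gs" using Cons gen_Cons by metis
    have X: "\<exists>A a. is_Map C Xo Xm (gen [F] \<union> gen Gs) A a"
      by (rule Map_union[OF gen_dclosed gen_dclosed M1 M2 M0'])
    show "\<exists>A a. is_Map C Xo Xm (gen Fs) A a" unfolding e by (rule X)
  qed
qed

lemma Map_gen: "(\<forall>F\<in>set Fs. finite F) \<Longrightarrow> \<exists>A a. is_Map C Xo Xm (gen Fs) A a"
  using Map_gen_aux by blast

lemma Map_horn: "\<exists>A a. is_Map C Xo Xm (horn n i) A a"
  unfolding horn_gen by (rule Map_gen) auto

end


lemma horn_sub: "horn n i \<subseteq> simplex_set n" unfolding horn_def by auto
lemma skel_sub: "skel j n \<subseteq> simplex_set n" unfolding skel_def by auto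
lemma skel_mono: "j \<le> j' \<Longrightarrow> skel j n \<subseteq> skel j' n" unfolding skel_def by auto

lemma img_restr: "restr m f ` {0..m} = f ` {0..m}" unfolding restr_def by auto

lemma simplex_comp: "mono_map m' N \<tau> \<Longrightarrow> mono_map N n \<iota> \<Longrightarrow> (m', restr m' (\<iota> \<circ> \<tau>)) \<in> simplex_set n"
  unfolding simplex_set_def normal_def mono_map_def restr_def by auto

lemma horn_card: "(m,\<tau>) \<in> horn N i \<Longrightarrow> card (\<tau> ` {0..m}) \<le> N"
proof -
  assume h: "(m,\<tau>) \<in> horn N i"
  then obtain l where l: "l \<le> N" "l \<notin> \<tau> ` {0..m}" unfolding horn_def by auto
  have "\<tau> ` {0..m} \<subseteq> {0..N} - {l}" using h l unfolding horn_def simplex_set_def mono_map_def by auto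
  then have "card (\<tau> ` {0..m}) \<le> card ({0..N} - {l})" by (rule card_mono[rotated]) simp
  also have "\<dots> = N" using l by simp
  finally show ?thesis .
qed

lemma comp_skel:
  assumes "(m',\<tau>) \<in> horn (Suc j) 1" "mono_map (Suc j) n \<iota>"
  shows "(m', restr m' (\<iota> \<circ> \<tau>)) \<in> skel j n"
proof -
  have mt: "mono_map m' (Suc j) \<tau>" using assms(1) unfolding horn_def simplex_set_def by auto
  have "card (restr m' (\<iota> \<circ> \<tau>) ` {0..m'}) = card (\<iota> ` (\<tau> ` {0..m'}))" by (simp add: img_restr image_comp)
  also have "\<dots> \<le> card (\<tau> ` {0..m'})" by (rule card_image_le) simp
  also have "\<dots> \<le> Suc j" using horn_card[OF assms(1)] .
  finally show ?thesis using simplex_comp[OF mt assms(2)] unfolding skel_def by auto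
qed

locale sxk = sxl +
  fixes Cov k
  assumes kcat: "k_category C Cov k Xo Xm" and kpos: "0 < k"
begin

lemma horn_lim_iso:
  assumes "k < n" "0 < i" "i < n" "is_Map C Xo Xm (horn n i) A a"
  shows "iso C (can_map C Xo Xm n (horn n i) A a)"
  using kcat assms unfolding k_category_def by blast

lemma HornMono:
  assumes n: "k < n" "0 < i" "i < n" and u: "hom C B (Xo n) u1" "hom C B (Xo n) u2"
    and e: "\<And>m \<sigma>. (m,\<sigma>) \<in> horn n i \<Longrightarrow> Cmp C (Xm m n \<sigma>) u1 = Cmp C (Xm m n \<sigma>) u2"
  shows "u1 = u2"
proof -
  obtain A a where M: "is_Map C Xo Xm (horn n i) A a" using Map_horn by blast
  define c where "c = can_map C Xo Xm n (horn n i) A a"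
  have c: "hom C (Xo n) A c" "\<forall>s\<in>horn n i. Cmp C (a s) c = can_cone Xm n s"
    using can_map_prop[OF M horn_sub] unfolding c_def by auto
  have ic: "iso C c" using horn_lim_iso[OF n M] unfolding c_def .
  have "Cmp C c u1 = Cmp C c u2"
  proof (rule Map_uniq[OF M hom_comp[OF u(1) c(1)] hom_comp[OF u(2) c(1)]])
    fix s assume s: "s \<in> horn n i"
    obtain m \<sigma> where sp: "s = (m,\<sigma>)" by (cases s)
    have h: "hom C A (Xo m) (a s)" using cone_hom[OF Map_cone[OF M]] s sp by blast
    have "Cmp C (a s) (Cmp C c u1) = Cmp C (Xm m n \<sigma>) u1"
      using assoc[OF u(1) c(1) h] c(2) s sp by (simp add: can_cone_def)
    moreover have "Cmp C (a s) (Cmp C c u2) = Cmp C (Xm m n \<sigma>) u2"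
      using assoc[OF u(2) c(1) h] c(2) s sp by (simp add: can_cone_def)
    ultimately show "Cmp C (a s) (Cmp C c u1) = Cmp C (a s) (Cmp C c u2)" using e s sp by simp
  qed
  then show ?thesis using iso_cancel[OF ic c(1) u] by blast
qed

lemma HornExists:
  assumes n: "k < n" "0 < i" "i < n" and b: "is_cone C Xo Xm (horn n i) B b"
  shows "\<exists>u. hom C B (Xo n) u \<and> (\<forall>m \<sigma>. (m,\<sigma>) \<in> horn n i \<longrightarrow> Cmp C (Xm m n \<sigma>) u = b (m,\<sigma>))"
proof -
  obtain A a where M: "is_Map C Xo Xm (horn n i) A a" using Map_horn by blast
  define c where "c = can_map C Xo Xm n (horn n i) A a"
  have c: "hom C (Xo n) A c" "\<forall>s\<in>horn n i. Cmp C (a s) c = can_cone Xm n s"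
    using can_map_prop[OF M horn_sub] unfolding c_def by auto
  have ic: "iso C c" using horn_lim_iso[OF n M] unfolding c_def .
  obtain g where g: "hom C A (Xo n) g" "Cmp C c g = Idm C A"
    using ic c(1) unfolding iso_def hom_def by metis
  obtain v where v: "hom C B A v" "\<forall>s\<in>horn n i. Cmp C (a s) v = b s"
    using Map_ex[OF M b] by blast
  show ?thesis
  proof (intro exI conjI allI impI)
    show "hom C B (Xo n) (Cmp C g v)" using hom_comp[OF v(1) g(1)] .
  next
    fix m \<sigma> assume s: "(m,\<sigma>) \<in> horn n i"
    have h: "hom C A (Xo m) (a (m,\<sigma>))" using cone_hom[OF Map_cone[OF M] s] .
    have "Cmp C (Xm m n \<sigma>) (Cmp C g v) = Cmp C (Cmp C (a (m,\<sigma>)) c) (Cmp C g v)"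
      using c(2) s by (simp add: can_cone_def)
    also have "\<dots> = Cmp C (a (m,\<sigma>)) (Cmp C c (Cmp C g v))"
      using assoc[OF hom_comp[OF v(1) g(1)] c(1) h] by simp
    also have "\<dots> = Cmp C (a (m,\<sigma>)) (Cmp C (Cmp C c g) v)"
      using assoc[OF v(1) g(1) c(1)] by simp
    also have "\<dots> = Cmp C (a (m,\<sigma>)) v" using g(2) id_l[OF v(1)] by simp
    also have "\<dots> = b (m,\<sigma>)" using v(2) s by blast
    finally show "Cmp C (Xm m n \<sigma>) (Cmp C g v) = b (m,\<sigma>)" .
  qed
qed

end


lemma big_facts:
  assumes S: "S = \<sigma> ` {0..m}" and sm: "(m,\<sigma>) \<in> simplex_set n" and c: "card S = Suc (Suc j)"
  shows "finite S" "mono_map (Suc j) n (en S)" "mono_map m (Suc j) (restr m (rk S \<circ> \<sigma>))"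
    "\<And>i. i \<le> m \<Longrightarrow> en S (rk S (\<sigma> i)) = \<sigma> i"
proof -
  show f: "finite S" using S by simp
  have Sn: "S \<subseteq> {0..n}" using sm S unfolding simplex_set_def mono_map_def by auto
  show "mono_map (Suc j) n (en S)" unfolding mono_map_def
  proof (intro conjI allI impI)
    fix i assume "i \<le> Suc j" then show "en S i \<le> n" using en_in[OF f, of i] c Sn by auto
  next
    fix i i' assume "i \<le> i' \<and> i' \<le> Suc j" then show "en S i \<le> en S i'" using en_mono[OF f] c by auto
  qed
  show "mono_map m (Suc j) (restr m (rk S \<circ> \<sigma>))" unfolding mono_map_def restr_def
  proof (intro conjI allI impI)
    fix i assume "i \<le> m" then have "\<sigma> i \<in> S" using S by auto
    then show "(if i \<le> m then (rk S \<circ> \<sigma>) i else 0) \<le> Suc j" using rk_lt[OF f] c by fastforce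
  next
    fix i i' assume "i \<le> i' \<and> i' \<le> m"
    then show "(if i \<le> m then (rk S \<circ> \<sigma>) i else 0) \<le> (if i' \<le> m then (rk S \<circ> \<sigma>) i' else 0)"
      using sm rk_mono[OF f] unfolding simplex_set_def mono_map_def by auto
  qed
  fix i assume "i \<le> m" then show "en S (rk S (\<sigma> i)) = \<sigma> i" using en_rk[OF f] S by auto
qed

context sxk begin

lemma US:
  assumes j: "k + 1 \<le> j" and u: "hom C B (Xo n) u1" "hom C B (Xo n) u2"
    and e: "\<And>m \<sigma>. (m,\<sigma>) \<in> skel j n \<Longrightarrow> Cmp C (Xm m n \<sigma>) u1 = Cmp C (Xm m n \<sigma>) u2"
    and s: "(m,\<sigma>) \<in> skel (Suc j) n"
  shows "Cmp C (Xm m n \<sigma>) u1 = Cmp C (Xm m n \<sigma>) u2"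
proof (cases "card (\<sigma> ` {0..m}) \<le> Suc j")
  case True
  then have "(m,\<sigma>) \<in> skel j n" using s unfolding skel_def by auto
  then show ?thesis using e by blast
next
  case False
  define S where "S = \<sigma> ` {0..m}"
  have sm: "(m,\<sigma>) \<in> simplex_set n" using s unfolding skel_def by auto
  have cS: "card S = Suc (Suc j)" using s False unfolding skel_def S_def by auto
  note bf = big_facts[OF S_def sm cS]
  define \<rho> where "\<rho> = restr m (rk S \<circ> \<sigma>)"
  have ms: "mono_map m n \<sigma>" using sm unfolding simplex_set_def by auto
  have fac: "Xm m n \<sigma> = Cmp C (Xm m (Suc j) \<rho>) (Xm (Suc j) n (en S))"
  proof -
    have "Cmp C (Xm m (Suc j) \<rho>) (Xm (Suc j) n (en S)) = Xm m n (en S \<circ> \<rho>)"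
      using Xm_comp[OF bf(3)[folded \<rho>_def] bf(2)] .
    also have "\<dots> = Xm m n \<sigma>"
      by (rule Xm_cong[OF mono_comp[OF bf(3)[folded \<rho>_def] bf(2)]]) (simp add: \<rho>_def restr_def bf(4))
    finally show ?thesis by simp
  qed
  have hi: "hom C (Xo (Suc j)) (Xo m) (Xm m (Suc j) \<rho>)" using Xm_hom[OF bf(3)[folded \<rho>_def]] .
  have hI: "hom C (Xo n) (Xo (Suc j)) (Xm (Suc j) n (en S))" using Xm_hom[OF bf(2)] .
  have key: "Cmp C (Xm (Suc j) n (en S)) u1 = Cmp C (Xm (Suc j) n (en S)) u2"
  proof (rule HornMono[of "Suc j" 1])
    show "k < Suc j" "0 < (1::nat)" "1 < Suc j" using j kpos by auto
    show "hom C B (Xo (Suc j)) (Cmp C (Xm (Suc j) n (en S)) u1)" using hom_comp[OF u(1) hI] .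
    show "hom C B (Xo (Suc j)) (Cmp C (Xm (Suc j) n (en S)) u2)" using hom_comp[OF u(2) hI] .
  next
    fix m' \<tau> assume t: "(m',\<tau>) \<in> horn (Suc j) 1"
    have mt: "mono_map m' (Suc j) \<tau>" using t unfolding horn_def simplex_set_def by auto
    have eq: "Cmp C (Xm m' (Suc j) \<tau>) (Xm (Suc j) n (en S)) = Xm m' n (restr m' (en S \<circ> \<tau>))"
      using Xm_comp[OF mt bf(2)] Xm_cong[OF mono_comp[OF mt bf(2)], of "restr m' (en S \<circ> \<tau>)"]
      by (simp add: restr_def)
    have sk: "(m', restr m' (en S \<circ> \<tau>)) \<in> skel j n" using comp_skel[OF t bf(2)] .
    show "Cmp C (Xm m' (Suc j) \<tau>) (Cmp C (Xm (Suc j) n (en S)) u1) =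
          Cmp C (Xm m' (Suc j) \<tau>) (Cmp C (Xm (Suc j) n (en S)) u2)"
      using assoc[OF u(1) hI Xm_hom[OF mt]] assoc[OF u(2) hI Xm_hom[OF mt]] eq e[OF sk] by simp
  qed
  show ?thesis using fac assoc[OF u(1) hI hi] assoc[OF u(2) hI hi] key by simp
qed

end


definition wprop where
  "wprop C Xo Xm j b \<iota> B w \<longleftrightarrow> hom C B (Xo (Suc j)) w \<and>
     (\<forall>m' \<tau>. (m',\<tau>) \<in> horn (Suc j) 1 \<longrightarrow> Cmp C (Xm m' (Suc j) \<tau>) w = b (m', restr m' (\<iota> \<circ> \<tau>)))"

context sxk begin

lemma Wex:
  assumes j: "k + 1 \<le> j" and b: "is_cone C Xo Xm (skel j n) B b" and i: "mono_map (Suc j) n \<iota>"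
  shows "\<exists>w. wprop C Xo Xm j b \<iota> B w"
proof -
  define b' where "b' = (\<lambda>(m'::nat, \<tau>::nat\<Rightarrow>nat). b (m', restr m' (\<iota> \<circ> \<tau>)))"
  have c: "is_cone C Xo Xm (horn (Suc j) 1) B b'"
  proof (rule coneI)
    show "B \<in> Ob C" using cone_Ob[OF b] .
  next
    fix m \<sigma> assume "(m,\<sigma>) \<in> horn (Suc j) 1"
    then show "hom C B (Xo m) (b' (m,\<sigma>))" unfolding b'_def using cone_hom[OF b comp_skel[OF _ i]] by simp
  next
    fix m \<sigma> m' \<theta> assume s: "(m,\<sigma>) \<in> horn (Suc j) 1" and th: "mono_map m' m \<theta>"
    have "Cmp C (Xm m' m \<theta>) (b' (m,\<sigma>)) = b (m', restr m' (restr m (\<iota> \<circ> \<sigma>) \<circ> \<theta>))"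
      unfolding b'_def using cone_comm[OF b comp_skel[OF s i] th] by simp
    also have "restr m' (restr m (\<iota> \<circ> \<sigma>) \<circ> \<theta>) = restr m' (\<iota> \<circ> restr m' (\<sigma> \<circ> \<theta>))"
      using th unfolding restr_def mono_map_def by auto
    finally show "Cmp C (Xm m' m \<theta>) (b' (m,\<sigma>)) = b' (m', restr m' (\<sigma> \<circ> \<theta>))" unfolding b'_def by simp
  qed
  obtain u where u: "hom C B (Xo (Suc j)) u"
    "\<forall>m \<sigma>. (m,\<sigma>) \<in> horn (Suc j) 1 \<longrightarrow> Cmp C (Xm m (Suc j) \<sigma>) u = b' (m,\<sigma>)"
    using HornExists[of "Suc j" 1, OF _ _ _ c] j kpos by auto
  show ?thesis unfolding wprop_def using u unfolding b'_def by auto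
qed

definition dl :: "nat \<Rightarrow> nat" where "dl x = (if x = 0 then 0 else Suc x)"
definition sl :: "nat \<Rightarrow> nat" where "sl x = (if x = 0 then 0 else x - 1)"

lemma W:
  assumes j: "k + 1 \<le> j" and b: "is_cone C Xo Xm (skel j n) B b" and i: "mono_map (Suc j) n \<iota>"
    and w: "wprop C Xo Xm j b \<iota> B w"
  shows "Cmp C (Xm j (Suc j) dl) w = b (j, restr j (\<iota> \<circ> dl))"
proof -
  have md: "mono_map j (Suc j) dl" unfolding mono_map_def dl_def by auto
  have wh: "hom C B (Xo (Suc j)) w" using w unfolding wprop_def by blast
  have sk: "(j, restr j (\<iota> \<circ> dl)) \<in> skel j n"
  proof -
    have "(j, restr j (\<iota> \<circ> dl)) \<in> simplex_set n" using simplex_comp[OF md i] .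
    moreover have "card (restr j (\<iota> \<circ> dl) ` {0..j}) \<le> j + 1"
      using card_image_le[of "{0..j}" "restr j (\<iota> \<circ> dl)"] by simp
    ultimately show ?thesis unfolding skel_def by auto
  qed
  show ?thesis
  proof (rule HornMono[of j 1])
    show "k < j" "0 < (1::nat)" "1 < j" using j kpos by auto
    show "hom C B (Xo j) (Cmp C (Xm j (Suc j) dl) w)" using hom_comp[OF wh Xm_hom[OF md]] .
    show "hom C B (Xo j) (b (j, restr j (\<iota> \<circ> dl)))" using cone_hom[OF b sk] .
  next
    fix m' \<tau> assume t: "(m',\<tau>) \<in> horn j 1"
    have mt: "mono_map m' j \<tau>" using t unfolding horn_def simplex_set_def by auto
    obtain l where l: "l \<le> j" "l \<noteq> 1" "l \<notin> \<tau> ` {0..m'}" using t unfolding horn_def by auto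
    have ht: "(m', restr m' (dl \<circ> \<tau>)) \<in> horn (Suc j) 1"
      unfolding horn_def mem_Collect_eq case_prod_conv
    proof (intro conjI)
      show "(m', restr m' (dl \<circ> \<tau>)) \<in> simplex_set (Suc j)" using simplex_comp[OF mt md] .
      show "\<exists>ja\<le>Suc j. ja \<noteq> 1 \<and> ja \<notin> restr m' (dl \<circ> \<tau>) ` {0..m'}"
      proof (intro exI conjI)
        show "dl l \<le> Suc j" "dl l \<noteq> 1" using l unfolding dl_def by auto
        show "dl l \<notin> restr m' (dl \<circ> \<tau>) ` {0..m'}"
          using l(3) unfolding img_restr dl_def by (auto split: if_splits)
      qed
    qed
    have "Cmp C (Xm m' j \<tau>) (Cmp C (Xm j (Suc j) dl) w) = Cmp C (Xm m' (Suc j) (dl \<circ> \<tau>)) w"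
      using assoc[OF wh Xm_hom[OF md] Xm_hom[OF mt]] Xm_comp[OF mt md] by simp
    also have "\<dots> = Cmp C (Xm m' (Suc j) (restr m' (dl \<circ> \<tau>))) w"
      using Xm_cong[OF mono_comp[OF mt md], of "restr m' (dl \<circ> \<tau>)"] by (simp add: restr_def)
    also have "\<dots> = b (m', restr m' (\<iota> \<circ> restr m' (dl \<circ> \<tau>)))" using w ht unfolding wprop_def by blast
    also have "restr m' (\<iota> \<circ> restr m' (dl \<circ> \<tau>)) = restr m' (restr j (\<iota> \<circ> dl) \<circ> \<tau>)"
      using mt unfolding restr_def mono_map_def by auto
    also have "b (m', restr m' (restr j (\<iota> \<circ> dl) \<circ> \<tau>)) = Cmp C (Xm m' j \<tau>) (b (j, restr j (\<iota> \<circ> dl)))"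
      using cone_comm[OF b sk mt] by simp
    finally show "Cmp C (Xm m' j \<tau>) (Cmp C (Xm j (Suc j) dl) w) = Cmp C (Xm m' j \<tau>) (b (j, restr j (\<iota> \<circ> dl)))" .
  qed
qed

lemma K:
  assumes j: "k + 1 \<le> j" and b: "is_cone C Xo Xm (skel j n) B b" and i: "mono_map (Suc j) n \<iota>"
    and w: "wprop C Xo Xm j b \<iota> B w"
    and r: "mono_map m (Suc j) \<rho>" and l: "l \<le> Suc j" "l \<notin> \<rho> ` {0..m}"
  shows "Cmp C (Xm m (Suc j) \<rho>) w = b (m, restr m (\<iota> \<circ> \<rho>))"
proof (cases "\<exists>l'\<le>Suc j. l' \<noteq> 1 \<and> l' \<notin> \<rho> ` {0..m}")
  case True
  have h: "(m, restr m \<rho>) \<in> horn (Suc j) 1" unfolding horn_def simplex_set_def mem_Collect_eq case_prod_conv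
    using True mono_restr[OF r] by (auto simp: img_restr normal_def, auto simp: restr_def)
  have "Cmp C (Xm m (Suc j) \<rho>) w = Cmp C (Xm m (Suc j) (restr m \<rho>)) w"
    using Xm_cong[OF r, of "restr m \<rho>"] by (simp add: restr_def)
  also have "\<dots> = b (m, restr m (\<iota> \<circ> restr m \<rho>))" using w h unfolding wprop_def by blast
  also have "restr m (\<iota> \<circ> restr m \<rho>) = restr m (\<iota> \<circ> \<rho>)" unfolding restr_def by auto
  finally show ?thesis .
next
  case False
  then have l1: "l = 1" using l by blast
  define \<rho>' where "\<rho>' = restr m (sl \<circ> \<rho>)"
  have md: "mono_map j (Suc j) dl" unfolding mono_map_def dl_def by auto
  have mr: "mono_map m j \<rho>'" using r unfolding \<rho>'_def mono_map_def restr_def sl_def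
    by (auto simp: diff_le_mono) (metis le_zero_eq not_gr0)
  have wh: "hom C B (Xo (Suc j)) w" using w unfolding wprop_def by blast
  have sk: "(j, restr j (\<iota> \<circ> dl)) \<in> skel j n"
  proof -
    have "(j, restr j (\<iota> \<circ> dl)) \<in> simplex_set n" using simplex_comp[OF md i] .
    moreover have "card (restr j (\<iota> \<circ> dl) ` {0..j}) \<le> j + 1"
      using card_image_le[of "{0..j}" "restr j (\<iota> \<circ> dl)"] by simp
    ultimately show ?thesis unfolding skel_def by auto
  qed
  have dr: "\<And>x. x \<le> m \<Longrightarrow> dl (\<rho>' x) = \<rho> x"
  proof -
    fix x assume x: "x \<le> m"
    have "\<rho> x \<noteq> 1" using l(2) l1 x by (metis atLeastAtMost_iff image_eqI le0)
    then show "dl (\<rho>' x) = \<rho> x" using x unfolding \<rho>'_def restr_def dl_def sl_def by auto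
  qed
  have "Xm m (Suc j) \<rho> = Xm m (Suc j) (dl \<circ> \<rho>')"
    using Xm_cong[OF r, of "dl \<circ> \<rho>'"] dr by simp
  also have "\<dots> = Cmp C (Xm m j \<rho>') (Xm j (Suc j) dl)" using Xm_comp[OF mr md] by simp
  finally have "Cmp C (Xm m (Suc j) \<rho>) w = Cmp C (Xm m j \<rho>') (Cmp C (Xm j (Suc j) dl) w)"
    using assoc[OF wh Xm_hom[OF md] Xm_hom[OF mr]] by simp
  also have "\<dots> = Cmp C (Xm m j \<rho>') (b (j, restr j (\<iota> \<circ> dl)))" using W[OF j b i w] by simp
  also have "\<dots> = b (m, restr m (restr j (\<iota> \<circ> dl) \<circ> \<rho>'))" using cone_comm[OF b sk mr] .
  also have "restr m (restr j (\<iota> \<circ> dl) \<circ> \<rho>') = restr m (\<iota> \<circ> \<rho>)"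
  proof
    fix x show "restr m (restr j (\<iota> \<circ> dl) \<circ> \<rho>') x = restr m (\<iota> \<circ> \<rho>) x"
      using mr dr[of x] unfolding restr_def mono_map_def by auto
  qed
  finally show ?thesis .
qed

end


context sxk begin

lemma ES:
  assumes j: "k + 1 \<le> j" and b: "is_cone C Xo Xm (skel j n) B b"
  shows "\<exists>b'. is_cone C Xo Xm (skel (Suc j) n) B b' \<and> (\<forall>s\<in>skel j n. b' s = b s)"
proof -
  define W where "W = (\<lambda>S. SOME w. wprop C Xo Xm j b (en S) B w)"
  define b' where "b' = (\<lambda>(m::nat,\<sigma>::nat\<Rightarrow>nat). if card (\<sigma> ` {0..m}) \<le> Suc j then b (m,\<sigma>)
      else Cmp C (Xm m (Suc j) (restr m (rk (\<sigma> ` {0..m}) \<circ> \<sigma>))) (W (\<sigma> ` {0..m})))"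
  have Wp: "wprop C Xo Xm j b (en (\<sigma> ` {0..m})) B (W (\<sigma> ` {0..m}))"
    if sm: "(m,\<sigma>) \<in> simplex_set n" and c: "card (\<sigma> ` {0..m}) = Suc (Suc j)" for m \<sigma>
  proof -
    note bf = big_facts[OF refl sm c]
    show ?thesis unfolding W_def by (rule someI_ex[OF Wex[OF j b bf(2)]])
  qed
  have small: "(m,\<sigma>) \<in> skel j n" if "(m,\<sigma>) \<in> skel (Suc j) n" "card (\<sigma> ` {0..m}) \<le> Suc j" for m \<sigma>
    using that unfolding skel_def by auto
  have big: "card (\<sigma> ` {0..m}) = Suc (Suc j)" if "(m,\<sigma>) \<in> skel (Suc j) n" "\<not> card (\<sigma> ` {0..m}) \<le> Suc j" for m \<sigma>
    using that unfolding skel_def by auto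
  have cone: "is_cone C Xo Xm (skel (Suc j) n) B b'"
  proof (rule coneI)
    show "B \<in> Ob C" using cone_Ob[OF b] .
  next
    fix m \<sigma> assume s: "(m,\<sigma>) \<in> skel (Suc j) n"
    show "hom C B (Xo m) (b' (m,\<sigma>))"
    proof (cases "card (\<sigma> ` {0..m}) \<le> Suc j")
      case True then show ?thesis unfolding b'_def using cone_hom[OF b small[OF s True]] by simp
    next
      case False
      have sm: "(m,\<sigma>) \<in> simplex_set n" using s unfolding skel_def by auto
      note c = big[OF s False]
      note bf = big_facts[OF refl sm c]
      have "hom C B (Xo (Suc j)) (W (\<sigma> ` {0..m}))" using Wp[OF sm c] unfolding wprop_def by blast
      then show ?thesis unfolding b'_def using False hom_comp[OF _ Xm_hom[OF bf(3)]] by simp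
    qed
  next
    fix m \<sigma> m' \<theta> assume s: "(m,\<sigma>) \<in> skel (Suc j) n" and th: "mono_map m' m \<theta>"
    define \<sigma>' where "\<sigma>' = restr m' (\<sigma> \<circ> \<theta>)"
    have sm: "(m,\<sigma>) \<in> simplex_set n" using s unfolding skel_def by auto
    have ms: "mono_map m n \<sigma>" using sm unfolding simplex_set_def by auto
    have sm': "(m',\<sigma>') \<in> simplex_set n" unfolding \<sigma>'_def using simplex_comp[OF th ms] .
    have img': "\<sigma>' ` {0..m'} = \<sigma> ` (\<theta> ` {0..m'})" unfolding \<sigma>'_def img_restr by (simp add: image_comp)
    have sub: "\<sigma>' ` {0..m'} \<subseteq> \<sigma> ` {0..m}" unfolding img' using th unfolding mono_map_def by auto
    have cle: "card (\<sigma>' ` {0..m'}) \<le> card (\<sigma> ` {0..m})" by (rule card_mono[OF _ sub]) simp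
    have s': "(m',\<sigma>') \<in> skel (Suc j) n" using s sm' cle unfolding skel_def by auto
    show "Cmp C (Xm m' m \<theta>) (b' (m,\<sigma>)) = b' (m', \<sigma>')" unfolding \<sigma>'_def[symmetric]
    proof (cases "card (\<sigma> ` {0..m}) \<le> Suc j")
      case True
      then have "card (\<sigma>' ` {0..m'}) \<le> Suc j" using cle by simp
      then show ?thesis unfolding b'_def using True cone_comm[OF b small[OF s True] th] \<sigma>'_def by simp
    next
      case False
      note c = big[OF s False]
      define S where "S = \<sigma> ` {0..m}"
      note bf = big_facts[OF S_def sm c[folded S_def]]
      define \<rho> where "\<rho> = restr m (rk S \<circ> \<sigma>)"
      have mr: "mono_map m (Suc j) \<rho>" using bf(3) unfolding \<rho>_def .
      have w: "wprop C Xo Xm j b (en S) B (W S)" using Wp[OF sm c] unfolding S_def .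
      have wh: "hom C B (Xo (Suc j)) (W S)" using w unfolding wprop_def by blast
      have bm: "b' (m,\<sigma>) = Cmp C (Xm m (Suc j) \<rho>) (W S)" unfolding b'_def \<rho>_def S_def using False by simp
      have "Cmp C (Xm m' m \<theta>) (b' (m,\<sigma>)) = Cmp C (Xm m' (Suc j) (\<rho> \<circ> \<theta>)) (W S)"
        unfolding bm using assoc[OF wh Xm_hom[OF mr] Xm_hom[OF th]] Xm_comp[OF th mr] by simp
      also have rt: "\<dots> = Cmp C (Xm m' (Suc j) (restr m' (rk S \<circ> \<sigma>'))) (W S)"
        using Xm_cong[OF mono_comp[OF th mr], of "restr m' (rk S \<circ> \<sigma>')"] th
        unfolding \<rho>_def \<sigma>'_def restr_def mono_map_def by simp
      finally have L: "Cmp C (Xm m' m \<theta>) (b' (m,\<sigma>)) = Cmp C (Xm m' (Suc j) (restr m' (rk S \<circ> \<sigma>'))) (W S)" .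
      show ?thesis
      proof (cases "card (\<sigma>' ` {0..m'}) \<le> Suc j")
        case True
        have mr': "mono_map m' (Suc j) (restr m' (rk S \<circ> \<sigma>'))"
          using mono_comp[OF th mr] Xm_cong th unfolding \<rho>_def \<sigma>'_def restr_def mono_map_def by auto
        have im: "restr m' (rk S \<circ> \<sigma>') ` {0..m'} = rk S ` (\<sigma>' ` {0..m'})"
          unfolding img_restr by (simp add: image_comp)
        have "card (restr m' (rk S \<circ> \<sigma>') ` {0..m'}) \<le> Suc j"
          unfolding im using card_image_le[of "\<sigma>' ` {0..m'}" "rk S"] True by simp
        then have "\<not> {0..Suc j} \<subseteq> restr m' (rk S \<circ> \<sigma>') ` {0..m'}"
          using card_mono[of "restr m' (rk S \<circ> \<sigma>') ` {0..m'}" "{0..Suc j}"] by auto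
        then obtain l where l: "l \<le> Suc j" "l \<notin> restr m' (rk S \<circ> \<sigma>') ` {0..m'}"
          by (meson atLeastAtMost_iff subsetI)
        have "Cmp C (Xm m' (Suc j) (restr m' (rk S \<circ> \<sigma>'))) (W S) = b (m', restr m' (en S \<circ> restr m' (rk S \<circ> \<sigma>')))"
          by (rule K[OF j b bf(2) w mr' l])
        also have "restr m' (en S \<circ> restr m' (rk S \<circ> \<sigma>')) = \<sigma>'"
        proof
          fix x show "restr m' (en S \<circ> restr m' (rk S \<circ> \<sigma>')) x = \<sigma>' x"
            using bf(4) th unfolding \<sigma>'_def restr_def mono_map_def by auto
        qed
        finally have R: "Cmp C (Xm m' (Suc j) (restr m' (rk S \<circ> \<sigma>'))) (W S) = b (m', \<sigma>')" .
        have "b' (m',\<sigma>') = b (m',\<sigma>')" using True by (simp add: b'_def)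
        then show ?thesis using L R by metis
      next
        case False
        have eqS: "\<sigma>' ` {0..m'} = S"
          using card_subset_eq[OF _ sub] cle c False unfolding S_def by fastforce
        have "b' (m',\<sigma>') = Cmp C (Xm m' (Suc j) (restr m' (rk S \<circ> \<sigma>'))) (W S)"
          using False eqS by (simp add: b'_def)
        then show ?thesis using L by metis
      qed
    qed
  qed
  moreover have "\<forall>s\<in>skel j n. b' s = b s"
  proof
    fix s assume s: "s \<in> skel j n"
    obtain m \<sigma> where sp: "s = (m,\<sigma>)" by (cases s)
    then show "b' s = b s" using s unfolding b'_def skel_def by auto
  qed
  ultimately show ?thesis by blast
qed

end


lemma skel_all: "skel (k + 1 + n) n = simplex_set n"
proof -
  have "card (\<sigma> ` {0..m}) \<le> k + 1 + n + 1" if "(m,\<sigma>) \<in> simplex_set n" for m \<sigma>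
  proof -
    have "\<sigma> ` {0..m} \<subseteq> {0..n}" using that unfolding simplex_set_def mono_map_def by auto
    then have "card (\<sigma> ` {0..m}) \<le> card {0..n}" by (rule card_mono[rotated]) simp
    then show ?thesis by simp
  qed
  then show ?thesis unfolding skel_def by auto
qed

context sxk begin

lemma ext_chain:
  assumes b: "is_cone C Xo Xm (skel (k+1) n) B b"
  shows "\<exists>c. is_cone C Xo Xm (skel (k+1+d) n) B c \<and> (\<forall>s\<in>skel (k+1) n. c s = b s)"
proof (induction d)
  case 0 then show ?case using b by auto
next
  case (Suc d)
  then obtain c where c: "is_cone C Xo Xm (skel (k+1+d) n) B c" "\<forall>s\<in>skel (k+1) n. c s = b s" by blast
  obtain c' where c': "is_cone C Xo Xm (skel (Suc (k+1+d)) n) B c'" "\<forall>s\<in>skel (k+1+d) n. c' s = c s"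
    using ES[OF _ c(1)] by auto
  have "\<forall>s\<in>skel (k+1) n. c' s = b s" using c(2) c'(2) skel_mono[of "k+1" "k+1+d" n] by auto
  then show ?case using c' by auto
qed

lemma uniq_chain:
  assumes u: "hom C B (Xo n) u1" "hom C B (Xo n) u2"
    and e: "\<forall>(m,\<sigma>)\<in>skel (k+1) n. Cmp C (Xm m n \<sigma>) u1 = Cmp C (Xm m n \<sigma>) u2"
  shows "\<forall>(m,\<sigma>)\<in>skel (k+1+d) n. Cmp C (Xm m n \<sigma>) u1 = Cmp C (Xm m n \<sigma>) u2"
proof (induction d)
  case 0 then show ?case using e by simp
next
  case (Suc d)
  have "Cmp C (Xm m n \<sigma>) u1 = Cmp C (Xm m n \<sigma>) u2" if "(m,\<sigma>) \<in> skel (Suc (k+1+d)) n" for m \<sigma>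
    by (rule US[OF _ u _ that]) (use Suc in auto)
  then show ?case by auto
qed

lemma main_n: "is_Map C Xo Xm (skel (k + 1) n) (Xo n) (can_cone Xm n)"
proof (rule MapI)
  show "is_cone C Xo Xm (skel (k + 1) n) (Xo n) (can_cone Xm n)" using can_cone_cone[OF skel_sub] .
next
  fix B b assume b: "is_cone C Xo Xm (skel (k + 1) n) B b"
  obtain c where c: "is_cone C Xo Xm (skel (k+1+n) n) B c" "\<forall>s\<in>skel (k+1) n. c s = b s"
    using ext_chain[OF b] by blast
  have c': "is_cone C Xo Xm (simplex_set n) B c" using c(1) skel_all by simp
  have idm: "(n, restr n (\<lambda>i. i)) \<in> simplex_set n" unfolding simplex_set_def mono_map_def normal_def restr_def by auto
  show "\<exists>u. hom C B (Xo n) u \<and> (\<forall>s\<in>skel (k + 1) n. Cmp C (can_cone Xm n s) u = b s)"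
  proof (intro exI conjI ballI)
    show "hom C B (Xo n) (c (n, restr n (\<lambda>i. i)))" using cone_hom[OF c' idm] .
  next
    fix s assume s: "s \<in> skel (k+1) n"
    obtain m \<sigma> where sp: "s = (m,\<sigma>)" by (cases s)
    have sm: "(m,\<sigma>) \<in> simplex_set n" using s sp skel_sub by blast
    then have ms: "mono_map m n \<sigma>" and nm: "normal m \<sigma>" unfolding simplex_set_def by auto
    have "Cmp C (can_cone Xm n s) (c (n, restr n (\<lambda>i. i))) = c (m, restr m (restr n (\<lambda>i. i) \<circ> \<sigma>))"
      unfolding sp can_cone_def using cone_comm[OF c' idm ms] by simp
    also have "restr m (restr n (\<lambda>i. i) \<circ> \<sigma>) = \<sigma>"
      using ms nm unfolding restr_def mono_map_def normal_def by auto
    finally show "Cmp C (can_cone Xm n s) (c (n, restr n (\<lambda>i. i))) = b s"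
      using c(2) s sp by simp
  qed
next
  fix B u1 u2 assume u: "hom C B (Xo n) u1" "hom C B (Xo n) u2"
    "\<forall>s\<in>skel (k + 1) n. Cmp C (can_cone Xm n s) u1 = Cmp C (can_cone Xm n s) u2"
  have "\<forall>(m,\<sigma>)\<in>skel (k+1) n. Cmp C (Xm m n \<sigma>) u1 = Cmp C (Xm m n \<sigma>) u2"
    using u(3) unfolding can_cone_def by auto
  then have "\<forall>(m,\<sigma>)\<in>skel (k+1+n) n. Cmp C (Xm m n \<sigma>) u1 = Cmp C (Xm m n \<sigma>) u2"
    using uniq_chain[OF u(1,2)] by blast
  then have "\<forall>(m,\<sigma>)\<in>simplex_set n. Cmp C (Xm m n \<sigma>) u1 = Cmp C (Xm m n \<sigma>) u2"
    using skel_all by simp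
  moreover have idm: "(n, restr n (\<lambda>i. i)) \<in> simplex_set n" unfolding simplex_set_def mono_map_def normal_def restr_def by auto
  ultimately have "Cmp C (Xm n n (restr n (\<lambda>i. i))) u1 = Cmp C (Xm n n (restr n (\<lambda>i. i))) u2" by auto
  moreover have "Xm n n (restr n (\<lambda>i. i)) = Idm C (Xo n)"
    using Xm_cong[of n n "\<lambda>i. i" "restr n (\<lambda>i. i)"] Xm_id unfolding mono_map_def restr_def by auto
  ultimately show "u1 = u2" using id_l[OF u(1)] id_l[OF u(2)] by simp
qed

lemma main_iso:
  assumes M: "is_Map C Xo Xm (skel (k + 1) n) A a"
  shows "iso C (can_map C Xo Xm n (skel (k + 1) n) A a)"
  using two_limits_iso[OF main_n M] can_map_prop[OF M skel_sub] by blast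

end

theorem lemma6p2:
  fixes C :: "('o,'m) cat" and Cov :: "'m set" and k :: nat
    and Xo :: "nat \<Rightarrow> 'o" and Xm :: "nat \<Rightarrow> nat \<Rightarrow> (nat \<Rightarrow> nat) \<Rightarrow> 'm"
  assumes "descent_category C Cov"
    and "0 < k"
    and "k_category C Cov k Xo Xm"
  shows "\<forall>n. is_Map C Xo Xm (skel (k + 1) n) (Xo n) (can_cone Xm n) \<and>
             (\<forall>A a. is_Map C Xo Xm (skel (k + 1) n) A a \<longrightarrow>
                iso C (can_map C Xo Xm n (skel (k + 1) n) A a))"
proof -
  interpret sxk C Xo Xm Cov k
    using assms unfolding sxk_def sxl_def sxk_axioms_def sxl_axioms_def sx_def
      descent_category_def k_category_def by auto
  show ?thesis using main_n main_iso by blast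
qed


end
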